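(* Let $M$ be a finitely generated monoid and let $\Sigma \subset M$ be a finite generating subset of $M$. Then: (1) if $(M,\Sigma)$ satisfies the Weiss condition, then $M$ is sofic; (2) if $M$ is left-cancellative and sofic, then $(M,\Sigma)$ satisfies the Weiss condition.
   Context: For a finite set $\Sigma$, a $\Sigma$-labeled graph is a pair $\mathcal{G}=(V,E)$ with $E \subset V \times \Sigma \times V$ (loops and multiple edges allowed); it is finite if $V$ is finite. A path of length $n$ is a sequence of edges $(e_1,\dots,e_n)$ with the terminal vertex of $e_i$ equal to the initial vertex of $e_{i+1}$; the ball $B_r^{\mathcal{G}}(u)$ is the set of vertices $v$ for which there is a path of length $\le r$ from $u$ to $v$ (the length-$0$ path giving $u$ itself), regarded as the induced $\Sigma$-labeled subgraph (edges of $E$ with both endpoints in the ball) pointed at $u$. A pointed labeled graph isomorphism between pointed $\Sigma$-labeled graphs $(V,E,v_0)$ and $(V',E',v_0')$ is a bijection $\psi\colon V\to V'$ with $\psi(v_0)=v_0'$ such that $(u,\sigma,v)\in E$ iff $(\psi(u),\sigma,\psi(v))\in E'$. The Cayley graph $\mathcal{C}(M,\Sigma)$ has vertex set $M$ and edge set $\{(s,\sigma,s\sigma) : s \in M, \sigma \in \Sigma\}$; write $B_r(1_M)$ for the ball of radius $r$ about $1_M$ in it. Given a $\Sigma$-labeled graph $\mathcal{G}=(V,E)$ and $r \in \mathbb{N}$, let $V(r)$ be the set of vertices $v\in V$ for which there is a pointed labeled graph isomorphism from $B_r(1_M)$ (pointed at $1_M$) onto $B_r^{\mathcal{G}}(v)$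 (pointed at $v$). The pair $(M,\Sigma)$ satisfies the Weiss condition if for every $r \in \mathbb{N}$ and every $\delta>0$ there exists a finite $\Sigma$-labeled graph $\mathcal{G}=(V,E)$ with $|V(r)| \ge (1-\delta)|V|$. A monoid is left-cancellative if $st=st'$ implies $t=t'$. For a non-empty finite set $X$, $\mathrm{Map}(X)$ is the monoid of all maps $X\to X$ under composition with the Hamming metric $d_X(f,g)=|\{x : f(x)\ne g(x)\}|/|X|$. For finite $K\subset M$ and $\varepsilon,\alpha>0$, a map $\varphi\colon M\to\mathrm{Map}(X)$ is a $(K,\varepsilon)$-morphism if $d_X(\varphi(k_1k_2),\varphi(k_1)\varphi(k_2))\le\varepsilon$ for all $k_1,k_2\in K$ and $d_X(\varphi(1_M),\mathrm{Id}_X)\le\varepsilon$; it is $(K,\alpha)$-injective if $d_X(\varphi(k_1),\varphi(k_2))\ge\alpha$ for all distinct $k_1,k_2\in K$. $M$ is sofic if for every finite $K\subset M$ and $\varepsilon>0$ there are a non-empty finite set $X$ and a $(K,1-\varepsilon)$-injective $(K,\varepsilon)$-morphism $M\to\mathrm{Map}(X)$. *)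

theory Defs
  imports Main Complex_Main
begin

(* Sigma-labeled graphs are given by a vertex set V and an edge set E \<subseteq> V \<times> Sigma \<times> V. *)

primrec path_rel :: "('v \<times> 'l \<times> 'v) set \<Rightarrow> nat \<Rightarrow> 'v \<Rightarrow> 'v \<Rightarrow> bool" where
  "path_rel E 0 u v = (u = v)"
| "path_rel E (Suc n) u v = (\<exists>w l. (u, l, w) \<in> E \<and> path_rel E n w v)"

definition ball_verts :: "('v \<times> 'l \<times> 'v) set \<Rightarrow> nat \<Rightarrow> 'v \<Rightarrow> 'v set" where
  "ball_verts E r u = {v. \<exists>n\<le>r. path_rel E n u v}"

definition pointed_iso ::
  "('a \<Rightarrow> 'v) \<Rightarrow> 'a set \<Rightarrow> ('a \<times> 'l \<times> 'a) set \<Rightarrow> 'a \<Rightarrow>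
     'v set \<Rightarrow> ('v \<times> 'l \<times> 'v) set \<Rightarrow> 'v \<Rightarrow> bool" where
  "pointed_iso \<psi> A E a0 B E' b0 \<longleftrightarrow>
     bij_betw \<psi> A B \<and> \<psi> a0 = b0 \<and>
     (\<forall>u\<in>A. \<forall>v\<in>A. \<forall>l. (u, l, v) \<in> E \<longleftrightarrow> (\<psi> u, l, \<psi> v) \<in> E')"

definition cayley_edges :: "'a::monoid_mult set \<Rightarrow> ('a \<times> 'a \<times> 'a) set" where
  "cayley_edges \<Sigma> = {(s, \<sigma>, s * \<sigma>) | s \<sigma>. \<sigma> \<in> \<Sigma>}"

definition good_verts :: "'a::monoid_mult set \<Rightarrow> nat set \<Rightarrow> (nat \<times> 'a \<times> nat) set \<Rightarrow> nat \<Rightarrow> nat set" where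
  "good_verts \<Sigma> V E r = {v \<in> V. \<exists>\<psi>.
     pointed_iso \<psi> (ball_verts (cayley_edges \<Sigma>) r 1) (cayley_edges \<Sigma>) 1
                   (ball_verts E r v) E v}"

(* Weiss condition; finite graphs are taken with (nonempty) vertex sets of naturals *)
definition weiss_condition :: "'a::monoid_mult set \<Rightarrow> bool" where
  "weiss_condition \<Sigma> \<longleftrightarrow>
     (\<forall>r::nat. \<forall>\<delta>::real. \<delta> > 0 \<longrightarrow>
        (\<exists>V::nat set. \<exists>E. finite V \<and> V \<noteq> {} \<and> E \<subseteq> V \<times> \<Sigma> \<times> V \<and>
            real (card (good_verts \<Sigma> V E r)) \<ge> (1 - \<delta>) * real (card V)))"

definition hamming :: "nat set \<Rightarrow> (nat \<Rightarrow> nat) \<Rightarrow> (nat \<Rightarrow> nat) \<Rightarrow> real" where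
  "hamming X f g = real (card {x \<in> X. f x \<noteq> g x}) / real (card X)"

(* product in Map(X): maps act on the right, i.e. fg means "first f, then g"
   (the convention matching Cayley graph edges s -> s\<sigma>) *)
definition map_mult :: "(nat \<Rightarrow> nat) \<Rightarrow> (nat \<Rightarrow> nat) \<Rightarrow> (nat \<Rightarrow> nat)" where
  "map_mult f g = g \<circ> f"

definition is_morphism_approx :: "nat set \<Rightarrow> 'a::monoid_mult set \<Rightarrow> real \<Rightarrow> ('a \<Rightarrow> nat \<Rightarrow> nat) \<Rightarrow> bool" where
  "is_morphism_approx X K \<epsilon> \<phi> \<longleftrightarrow>
     (\<forall>k1\<in>K. \<forall>k2\<in>K. hamming X (\<phi> (k1 * k2)) (map_mult (\<phi> k1) (\<phi> k2)) \<le> \<epsilon>) \<and>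
     hamming X (\<phi> 1) id \<le> \<epsilon>"

definition is_injective_approx :: "nat set \<Rightarrow> 'a set \<Rightarrow> real \<Rightarrow> ('a \<Rightarrow> nat \<Rightarrow> nat) \<Rightarrow> bool" where
  "is_injective_approx X K \<alpha> \<phi> \<longleftrightarrow>
     (\<forall>k1\<in>K. \<forall>k2\<in>K. k1 \<noteq> k2 \<longrightarrow> hamming X (\<phi> k1) (\<phi> k2) \<ge> \<alpha>)"

(* sofic monoid (ambient type); finite sets X are taken inside nat, phi maps into Map(X) *)
definition sofic :: "'a::monoid_mult itself \<Rightarrow> bool" where
  "sofic _ \<longleftrightarrow>
     (\<forall>K::'a set. \<forall>\<epsilon>::real. finite K \<and> \<epsilon> > 0 \<longrightarrow>
        (\<exists>X::nat set. \<exists>\<phi>::'a \<Rightarrow> nat \<Rightarrow> nat.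
           finite X \<and> X \<noteq> {} \<and> (\<forall>m. \<phi> m ` X \<subseteq> X) \<and>
           is_injective_approx X K (1 - \<epsilon>) \<phi> \<and> is_morphism_approx X K \<epsilon> \<phi>))"

definition generates :: "'a::monoid_mult set \<Rightarrow> bool" where
  "generates \<Sigma> \<longleftrightarrow> (\<forall>m::'a. \<exists>xs. set xs \<subseteq> \<Sigma> \<and> m = prod_list xs)"

definition left_cancellative :: "'a::monoid_mult itself \<Rightarrow> bool" where
  "left_cancellative _ \<longleftrightarrow> (\<forall>s t t' :: 'a. s * t = s * t' \<longrightarrow> t = t')"

end

theory Submission
  imports Defs
begin

lemma path_rel_snoc:
  "path_rel E n u w \<Longrightarrow> (w,l,v) \<in> E \<Longrightarrow> path_rel E (Suc n) u v"
  by (induction n arbitrary: u) auto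

lemma path_rel_cayley:
  "path_rel (cayley_edges \<Sigma>) n u v \<longleftrightarrow> (\<exists>w. set w \<subseteq> \<Sigma> \<and> length w = n \<and> v = u * prod_list w)"
proof (induction n arbitrary: u)
  case 0 then show ?case by auto
next
  case (Suc n)
  show ?case
  proof
    assume "path_rel (cayley_edges \<Sigma>) (Suc n) u v"
    then obtain x l where "(u,l,x) \<in> cayley_edges \<Sigma>" "path_rel (cayley_edges \<Sigma>) n x v" by auto
    then obtain w where "l \<in> \<Sigma>" "x = u*l" "set w \<subseteq> \<Sigma>" "length w = n" "v = x * prod_list w"
      using Suc by (auto simp: cayley_edges_def)
    then show "\<exists>w. set w \<subseteq> \<Sigma> \<and> length w = Suc n \<and> v = u * prod_list w"
      by (intro exI[of _ "l#w"]) (auto simp: mult.assoc)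
  next
    assume "\<exists>w. set w \<subseteq> \<Sigma> \<and> length w = Suc n \<and> v = u * prod_list w"
    then obtain w where w: "set w \<subseteq> \<Sigma>" "length w = Suc n" "v = u * prod_list w" by blast
    then obtain l w' where lw: "w = l # w'" by (cases w) auto
    with w have "(u,l,u*l) \<in> cayley_edges \<Sigma>" "path_rel (cayley_edges \<Sigma>) n (u*l) v"
      using Suc by (auto simp: cayley_edges_def mult.assoc)
    then show "path_rel (cayley_edges \<Sigma>) (Suc n) u v" by auto
  qed
qed

lemma ball_cayley:
  "ball_verts (cayley_edges \<Sigma>) r 1 = {prod_list w | w. set w \<subseteq> \<Sigma> \<and> length w \<le> r}"
  unfolding ball_verts_def path_rel_cayley by auto

lemma finite_ball_cayley:
  assumes "finite \<Sigma>"
  shows "finite (ball_verts (cayley_edges \<Sigma>) r 1)"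
proof -
  have "ball_verts (cayley_edges \<Sigma>) r 1 = prod_list ` {w. set w \<subseteq> \<Sigma> \<and> length w \<le> r}"
    unfolding ball_cayley by auto
  then show ?thesis using finite_lists_length_le[OF assms] by simp
qed

lemma path_rel_fun:
  assumes "\<And>\<sigma>. \<phi> \<sigma> ` X \<subseteq> X"
  shows "u \<in> X \<Longrightarrow> path_rel {(x,\<sigma>,\<phi> \<sigma> x) | x \<sigma>. x \<in> X \<and> \<sigma> \<in> \<Sigma>} n u v \<longleftrightarrow>
    (\<exists>w. set w \<subseteq> \<Sigma> \<and> length w = n \<and> v = foldl (\<lambda>y \<sigma>. \<phi> \<sigma> y) u w)"
proof (induction n arbitrary: u)
  case 0 then show ?case by auto
next
  case (Suc n)
  have X: "\<phi> l u \<in> X" for l using assms Suc.prems by blast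
  show ?case
  proof
    assume "path_rel {(x,\<sigma>,\<phi> \<sigma> x) | x \<sigma>. x \<in> X \<and> \<sigma> \<in> \<Sigma>} (Suc n) u v"
    then obtain l where "l \<in> \<Sigma>" "path_rel {(x,\<sigma>,\<phi> \<sigma> x) | x \<sigma>. x \<in> X \<and> \<sigma> \<in> \<Sigma>} n (\<phi> l u) v"
      by auto
    then obtain w where "l \<in> \<Sigma>" "set w \<subseteq> \<Sigma>" "length w = n" "v = foldl (\<lambda>y \<sigma>. \<phi> \<sigma> y) (\<phi> l u) w"
      using Suc.IH[OF X] by blast
    then show "\<exists>w. set w \<subseteq> \<Sigma> \<and> length w = Suc n \<and> v = foldl (\<lambda>y \<sigma>. \<phi> \<sigma> y) u w"
      by (intro exI[of _ "l#w"]) auto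
  next
    assume "\<exists>w. set w \<subseteq> \<Sigma> \<and> length w = Suc n \<and> v = foldl (\<lambda>y \<sigma>. \<phi> \<sigma> y) u w"
    then obtain w where w: "set w \<subseteq> \<Sigma>" "length w = Suc n" "v = foldl (\<lambda>y \<sigma>. \<phi> \<sigma> y) u w" by blast
    then obtain l w' where lw: "w = l # w'" by (cases w) auto
    with w have "path_rel {(x,\<sigma>,\<phi> \<sigma> x) | x \<sigma>. x \<in> X \<and> \<sigma> \<in> \<Sigma>} n (\<phi> l u) v"
      using Suc.IH[OF X] by auto
    moreover have "(u, l, \<phi> l u) \<in> {(x,\<sigma>,\<phi> \<sigma> x) | x \<sigma>. x \<in> X \<and> \<sigma> \<in> \<Sigma>}"
      using Suc.prems w lw by auto
    ultimately show "path_rel {(x,\<sigma>,\<phi> \<sigma> x) | x \<sigma>. x \<in> X \<and> \<sigma> \<in> \<Sigma>} (Suc n) u v" by auto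
  qed
qed

lemma hamming_le:
  assumes "finite X" "X \<noteq> {}" "G \<subseteq> X" "real (card G) \<ge> (1-d) * real (card X)"
    "\<And>x. x \<in> G \<Longrightarrow> f x = g x"
  shows "hamming X f g \<le> d"
proof -
  have "{x \<in> X. f x \<noteq> g x} \<subseteq> X - G" using assms by auto
  then have "card {x \<in> X. f x \<noteq> g x} \<le> card (X - G)" using assms by (intro card_mono) auto
  also have "card (X - G) = card X - card G" using assms by (simp add: card_Diff_subset finite_subset)
  finally have "real (card {x \<in> X. f x \<noteq> g x}) \<le> real (card X) - real (card G)"
    using card_mono[OF assms(1,3)] by linarith
  also have "\<dots> \<le> d * real (card X)" using assms(4) by (simp add: algebra_simps)
  finally show ?thesis unfolding hamming_def using assms
    by (simp add: divide_le_eq card_gt_0_iff)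
qed

lemma hamming_ge:
  assumes "finite X" "X \<noteq> {}" "G \<subseteq> X" "real (card G) \<ge> (1-d) * real (card X)"
    "\<And>x. x \<in> G \<Longrightarrow> f x \<noteq> g x"
  shows "hamming X f g \<ge> 1 - d"
proof -
  have "G \<subseteq> {x \<in> X. f x \<noteq> g x}" using assms by auto
  then have "card G \<le> card {x \<in> X. f x \<noteq> g x}" using assms by (intro card_mono) auto
  then have "(1-d) * real (card X) \<le> real (card {x \<in> X. f x \<noteq> g x})" using assms(4) by linarith
  then show ?thesis unfolding hamming_def using assms
    by (simp add: le_divide_eq card_gt_0_iff)
qed

lemma dir1:
  fixes \<Sigma> :: "'a::monoid_mult set"
  assumes gen: "generates \<Sigma>" and W: "weiss_condition \<Sigma>"
  shows "sofic TYPE('a)"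
  unfolding sofic_def
proof (intro allI impI, elim conjE)
  fix K :: "'a set" and \<epsilon> :: real
  assume fK: "finite K" and ep: "\<epsilon> > 0"
  define word where "word m = (SOME xs. set xs \<subseteq> \<Sigma> \<and> m = prod_list xs)" for m
  have word: "set (word m) \<subseteq> \<Sigma> \<and> m = prod_list (word m)" for m
  proof -
    have "\<exists>xs. set xs \<subseteq> \<Sigma> \<and> m = prod_list xs" using gen unfolding generates_def by blast
    then show ?thesis unfolding word_def by (rule someI_ex)
  qed
  define K' where "K' = insert 1 (K \<union> (\<lambda>(a,b). a*b) ` (K \<times> K))"
  have fK': "finite K'" using fK by (simp add: K'_def)
  define r where "r = 2 * Max ((\<lambda>m. length (word m)) ` K')"
  have lenr: "2 * length (word m) \<le> r" if "m \<in> K'" for m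
  proof -
    have "length (word m) \<le> Max ((\<lambda>m. length (word m)) ` K')"
      by (rule Max_ge) (use fK' that in auto)
    then show ?thesis unfolding r_def by simp
  qed
  obtain V :: "nat set" and E where V: "finite V" "V \<noteq> {}" "E \<subseteq> V \<times> \<Sigma> \<times> V"
    and G: "real (card (good_verts \<Sigma> V E r)) \<ge> (1 - \<epsilon>) * real (card V)"
    using W[unfolded weiss_condition_def, rule_format, of \<epsilon> r, OF ep] by blast
  define C where "C = cayley_edges \<Sigma>"
  define Br where "Br = ball_verts C r 1"
  define step where "step y \<sigma> = (if \<exists>u. (y,\<sigma>,u) \<in> E then SOME u. (y,\<sigma>,u) \<in> E else y)" for y \<sigma>
  define \<phi> where "\<phi> m y = foldl step y (word m)" for m y
  have stepV: "step y \<sigma> \<in> V" if "y \<in> V" for y \<sigma>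
  proof (cases "\<exists>u. (y,\<sigma>,u) \<in> E")
    case True
    then have "(y,\<sigma>,step y \<sigma>) \<in> E" unfolding step_def by (simp add: someI_ex[of "\<lambda>u. (y,\<sigma>,u) \<in> E"])
    then show ?thesis using V(3) by auto
  qed (simp add: step_def that)
  have foldV: "foldl step y w \<in> V" if "y \<in> V" for y w
    using that by (induction w arbitrary: y) (auto simp: stepV)
  have key: "\<forall>w. set w \<subseteq> \<Sigma> \<longrightarrow> length w \<le> r \<longrightarrow>
      foldl step v w = \<psi> (prod_list w) \<and> path_rel E (length w) v (foldl step v w)"
    if iso: "pointed_iso \<psi> Br C 1 (ball_verts E r v) E v" for v \<psi>
  proof (intro allI)
    have iff: "(a,l,b) \<in> C \<longleftrightarrow> (\<psi> a, l, \<psi> b) \<in> E" if "a \<in> Br" "b \<in> Br" for a b l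
      using iso that unfolding pointed_iso_def by blast
    have beq: "ball_verts E r v = \<psi> ` Br" using iso by (simp add: pointed_iso_def bij_betw_def)
    fix w show "set w \<subseteq> \<Sigma> \<longrightarrow> length w \<le> r \<longrightarrow>
      foldl step v w = \<psi> (prod_list w) \<and> path_rel E (length w) v (foldl step v w)"
    proof (induction w rule: rev_induct)
      case Nil then show ?case using iso by (simp add: pointed_iso_def)
    next
      case (snoc \<sigma> w)
      show ?case
      proof (intro impI)
        assume s: "set (w @ [\<sigma>]) \<subseteq> \<Sigma>" and l: "length (w @ [\<sigma>]) \<le> r"
        define p where "p = prod_list w"
        have IH: "foldl step v w = \<psi> p" "path_rel E (length w) v (\<psi> p)"
          using snoc s l by (auto simp: p_def)
        have sig: "\<sigma> \<in> \<Sigma>" using s by auto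
        have pB: "p \<in> Br" unfolding Br_def C_def ball_cayley p_def using s l by auto
        have pB': "p * \<sigma> \<in> Br" unfolding Br_def C_def ball_cayley p_def using s l
          by (intro CollectI exI[of _ "w @ [\<sigma>]"]) auto
        have ce: "(p, \<sigma>, p*\<sigma>) \<in> C" using sig by (auto simp: C_def cayley_edges_def)
        have e: "(\<psi> p, \<sigma>, \<psi> (p*\<sigma>)) \<in> E"
          using iff[OF pB pB'] ce by simp
        define u' where "u' = (SOME u. (\<psi> p, \<sigma>, u) \<in> E)"
        have u'E: "(\<psi> p, \<sigma>, u') \<in> E" unfolding u'_def using e by (rule someI)
        have "path_rel E (Suc (length w)) v u'" using path_rel_snoc[OF IH(2) u'E] .
        then have "u' \<in> ball_verts E r v" unfolding ball_verts_def using l by (intro CollectI exI[of _ "Suc (length w)"]) simp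
        then obtain a where a: "a \<in> Br" "u' = \<psi> a"
          using beq by auto
        then have "(p, \<sigma>, a) \<in> C" using iff[OF pB a(1)] u'E by simp
        then have "a = p * \<sigma>" by (auto simp: C_def cayley_edges_def)
        then have st: "step (\<psi> p) \<sigma> = \<psi> (p*\<sigma>)" using a e unfolding step_def u'_def by auto
        show "foldl step v (w @ [\<sigma>]) = \<psi> (prod_list (w @ [\<sigma>])) \<and>
          path_rel E (length (w @ [\<sigma>])) v (foldl step v (w @ [\<sigma>]))"
          using st IH path_rel_snoc[OF IH(2) e] by (simp add: p_def)
      qed
    qed
  qed
  define Gd where "Gd = good_verts \<Sigma> V E r"
  have GdV: "Gd \<subseteq> V" by (auto simp: Gd_def good_verts_def)
  have gv: "\<exists>\<psi>. pointed_iso \<psi> Br C 1 (ball_verts E r v) E v \<and>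
     (\<forall>m\<in>K'. \<phi> m v = \<psi> m \<and> m \<in> Br) \<and>
     (\<forall>k1\<in>K. \<forall>k2\<in>K. \<phi> k2 (\<phi> k1 v) = \<psi> (k1 * k2))" if vG: "v \<in> Gd" for v
  proof -
    obtain \<psi> where iso: "pointed_iso \<psi> Br C 1 (ball_verts E r v) E v"
      using vG unfolding Gd_def good_verts_def Br_def C_def by blast
    note k = key[OF iso]
    have 1: "\<phi> m v = \<psi> m \<and> m \<in> Br" if "m \<in> K'" for m
    proof -
      have len: "length (word m) \<le> r" using lenr[OF that] by simp
      have "\<phi> m v = \<psi> m" using k[rule_format, of "word m"] word[of m] len
        unfolding \<phi>_def by simp
      moreover have "m \<in> Br" unfolding Br_def C_def ball_cayley using word[of m] len by blast
      ultimately show ?thesis by blast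
    qed
    have 2: "\<phi> k2 (\<phi> k1 v) = \<psi> (k1 * k2)" if "k1 \<in> K" "k2 \<in> K" for k1 k2
    proof -
      have "k1 \<in> K'" "k2 \<in> K'" using that by (auto simp: K'_def)
      then have "length (word k1 @ word k2) \<le> r" using lenr[of k1] lenr[of k2] by simp
      then have "foldl step v (word k1 @ word k2) = \<psi> (prod_list (word k1 @ word k2))"
        using k[rule_format, of "word k1 @ word k2"] word[of k1] word[of k2] by simp
      then show ?thesis using word[of k1] word[of k2] unfolding \<phi>_def by simp
    qed
    show ?thesis using iso 1 2 by blast
  qed
  show "\<exists>X \<phi>. finite X \<and> X \<noteq> {} \<and> (\<forall>m. \<phi> m ` X \<subseteq> X) \<and>
           is_injective_approx X K (1 - \<epsilon>) \<phi> \<and> is_morphism_approx X K \<epsilon> \<phi>"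
  proof (intro exI conjI)
    show "finite V" "V \<noteq> {}" by (fact V)+
    show "\<forall>m. \<phi> m ` V \<subseteq> V" using foldV by (auto simp: \<phi>_def)
    have G': "real (card Gd) \<ge> (1 - \<epsilon>) * real (card V)" using G by (simp add: Gd_def)
    show "is_injective_approx V K (1 - \<epsilon>) \<phi>"
      unfolding is_injective_approx_def
    proof (intro ballI impI)
      fix k1 k2 assume k: "k1 \<in> K" "k2 \<in> K" "k1 \<noteq> k2"
      show "1 - \<epsilon> \<le> hamming V (\<phi> k1) (\<phi> k2)"
      proof (rule hamming_ge[OF V(1,2) GdV G'])
        fix v assume "v \<in> Gd"
        then obtain \<psi> where iso: "pointed_iso \<psi> Br C 1 (ball_verts E r v) E v"
          and h: "\<forall>m\<in>K'. \<phi> m v = \<psi> m \<and> m \<in> Br" using gv by blast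
        have "k1 \<in> K'" "k2 \<in> K'" using k by (auto simp: K'_def)
        moreover have "inj_on \<psi> Br" using iso by (simp add: pointed_iso_def bij_betw_def)
        ultimately show "\<phi> k1 v \<noteq> \<phi> k2 v" using h k(3) by (metis inj_onD)
      qed
    qed
    show "is_morphism_approx V K \<epsilon> \<phi>"
      unfolding is_morphism_approx_def
    proof (intro ballI conjI)
      fix k1 k2 assume k: "k1 \<in> K" "k2 \<in> K"
      show "hamming V (\<phi> (k1 * k2)) (map_mult (\<phi> k1) (\<phi> k2)) \<le> \<epsilon>"
      proof (rule hamming_le[OF V(1,2) GdV G'])
        fix v assume "v \<in> Gd"
        then obtain \<psi> where h: "\<forall>m\<in>K'. \<phi> m v = \<psi> m \<and> m \<in> Br"
          and h2: "\<forall>k1\<in>K. \<forall>k2\<in>K. \<phi> k2 (\<phi> k1 v) = \<psi> (k1 * k2)" using gv by blast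
        have "k1 * k2 \<in> K'" using k by (force simp: K'_def)
        then show "\<phi> (k1 * k2) v = map_mult (\<phi> k1) (\<phi> k2) v"
          using h h2 k by (simp add: map_mult_def)
      qed
    next
      show "hamming V (\<phi> 1) id \<le> \<epsilon>"
      proof (rule hamming_le[OF V(1,2) GdV G'])
        fix v assume "v \<in> Gd"
        then obtain \<psi> where iso: "pointed_iso \<psi> Br C 1 (ball_verts E r v) E v"
          and h: "\<forall>m\<in>K'. \<phi> m v = \<psi> m \<and> m \<in> Br" using gv by blast
        then show "\<phi> 1 v = id v" by (simp add: K'_def pointed_iso_def)
      qed
    qed
  qed
qed

lemma card_UN_bound:
  assumes "finite I" "\<And>i. i \<in> I \<Longrightarrow> real (card (A i)) \<le> c"
  shows "real (card (\<Union>i\<in>I. A i)) \<le> real (card I) * c"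
proof -
  have "real (card (\<Union>i\<in>I. A i)) \<le> real (\<Sum>i\<in>I. card (A i))"
    using card_UN_le[OF assms(1), of A] by linarith
  also have "\<dots> = (\<Sum>i\<in>I. real (card (A i)))" by simp
  also have "\<dots> \<le> (\<Sum>i\<in>I. c)" using assms(2) by (intro sum_mono) auto
  also have "\<dots> = real (card I) * c" by simp
  finally show ?thesis .
qed

lemma dir2:
  fixes \<Sigma> :: "'a::monoid_mult set"
  assumes fS: "finite \<Sigma>" and S: "sofic TYPE('a)"
  shows "weiss_condition \<Sigma>"
  unfolding weiss_condition_def
proof (intro allI impI)
  fix r :: nat and \<delta> :: real assume dp: "\<delta> > 0"
  define C where "C = cayley_edges \<Sigma>"
  define B where "B = ball_verts C (Suc r) 1"
  define Br where "Br = ball_verts C r 1"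
  have fB: "finite B" unfolding B_def C_def using finite_ball_cayley[OF fS] .
  define N where "N = 1 + card B * card \<Sigma> + card B * card B"
  define \<epsilon> where "\<epsilon> = \<delta> / real N"
  have Npos: "real N \<ge> 1" by (simp add: N_def)
  have ep: "\<epsilon> > 0" using dp Npos by (simp add: \<epsilon>_def)
  have Neps: "real N * \<epsilon> = \<delta>" using Npos by (simp add: \<epsilon>_def)
  obtain X :: "nat set" and \<phi> :: "'a \<Rightarrow> nat \<Rightarrow> nat" where X: "finite X" "X \<noteq> {}"
    and phiX: "\<And>m. \<phi> m ` X \<subseteq> X" and inj: "is_injective_approx X B (1-\<epsilon>) \<phi>"
    and mor: "is_morphism_approx X B \<epsilon> \<phi>"
    using S[unfolded sofic_def, rule_format, of B \<epsilon>] fB ep by blast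
  have cX: "real (card X) > 0" using X by (simp add: card_gt_0_iff)
  define E where "E = {(x,\<sigma>,\<phi> \<sigma> x) | x \<sigma>. x \<in> X \<and> \<sigma> \<in> \<Sigma>}"
  define P where "P = {p \<in> B \<times> B. fst p \<noteq> snd p}"
  define A1 where "A1 = {x \<in> X. \<phi> 1 x \<noteq> x}"
  define A2 where "A2 = (\<Union>p\<in>B \<times> \<Sigma>. {x\<in>X. \<phi> (fst p * snd p) x \<noteq> \<phi> (snd p) (\<phi> (fst p) x)})"
  define A3 where "A3 = (\<Union>p\<in>P. {x\<in>X. \<phi> (fst p) x = \<phi> (snd p) x})"
  define Bad where "Bad = A1 \<union> A2 \<union> A3"
  have SB: "\<Sigma> \<subseteq> B"
  proof
    fix \<sigma> assume "\<sigma> \<in> \<Sigma>"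
    then show "\<sigma> \<in> B" unfolding B_def C_def ball_cayley by (intro CollectI exI[of _ "[\<sigma>]"]) simp
  qed
  have BrB: "Br \<subseteq> B" unfolding B_def Br_def C_def ball_cayley by fastforce
  have hb: "real (card {x \<in> X. f x \<noteq> g x}) \<le> \<epsilon> * real (card X)" if "hamming X f g \<le> \<epsilon>" for f g
    using that cX unfolding hamming_def by (simp add: divide_le_eq)
  have c1: "real (card A1) \<le> \<epsilon> * real (card X)"
    unfolding A1_def using hb[of "\<phi> 1" id] mor by (simp add: is_morphism_approx_def)
  have c2: "real (card A2) \<le> real (card B * card \<Sigma>) * (\<epsilon> * real (card X))"
  proof -
    have "real (card A2) \<le> real (card (B \<times> \<Sigma>)) * (\<epsilon> * real (card X))"
      unfolding A2_def
    proof (rule card_UN_bound)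
      show "finite (B \<times> \<Sigma>)" using fB fS by simp
      fix p assume p: "p \<in> B \<times> \<Sigma>"
      then have "hamming X (\<phi> (fst p * snd p)) (map_mult (\<phi> (fst p)) (\<phi> (snd p))) \<le> \<epsilon>"
        using mor SB unfolding is_morphism_approx_def by auto
      then show "real (card {x\<in>X. \<phi> (fst p * snd p) x \<noteq> \<phi> (snd p) (\<phi> (fst p) x)}) \<le> \<epsilon> * real (card X)"
        using hb[of "\<phi> (fst p * snd p)" "\<phi> (snd p) \<circ> \<phi> (fst p)"] by (simp add: map_mult_def)
    qed
    then show ?thesis by (simp add: card_cartesian_product)
  qed
  have c3: "real (card A3) \<le> real (card B * card B) * (\<epsilon> * real (card X))"
  proof -
    have "real (card A3) \<le> real (card P) * (\<epsilon> * real (card X))"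
      unfolding A3_def
    proof (rule card_UN_bound)
      show "finite P" using fB by (simp add: P_def)
      fix p assume p: "p \<in> P"
      then have h: "hamming X (\<phi> (fst p)) (\<phi> (snd p)) \<ge> 1 - \<epsilon>"
        using inj unfolding is_injective_approx_def P_def by auto
      define D where "D = {x \<in> X. \<phi> (fst p) x \<noteq> \<phi> (snd p) x}"
      have "real (card D) / real (card X) \<ge> 1 - \<epsilon>" using h by (simp add: hamming_def D_def)
      then have hD: "real (card D) \<ge> (1 - \<epsilon>) * real (card X)" using cX by (simp add: le_divide_eq)
      have "{x\<in>X. \<phi> (fst p) x = \<phi> (snd p) x} = X - D" by (auto simp: D_def)
      moreover have "card (X - D) = card X - card D" using X by (intro card_Diff_subset) (auto simp: D_def)
      moreover have "card D \<le> card X" using X by (intro card_mono) (auto simp: D_def)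
      ultimately show "real (card {x\<in>X. \<phi> (fst p) x = \<phi> (snd p) x}) \<le> \<epsilon> * real (card X)"
        using hD by (simp add: of_nat_diff algebra_simps)
    qed
    moreover have "card P \<le> card (B \<times> B)" using fB by (intro card_mono) (auto simp: P_def)
    ultimately have "real (card A3) \<le> real (card (B \<times> B)) * (\<epsilon> * real (card X))"
      using ep cX by (meson dual_order.trans mult_right_mono of_nat_0_le_iff of_nat_le_iff
          less_imp_le mult_nonneg_nonneg)
    then show ?thesis by (simp add: card_cartesian_product)
  qed
  have cBad: "real (card Bad) \<le> \<delta> * real (card X)"
  proof -
    have "card Bad \<le> card A1 + card A2 + card A3" unfolding Bad_def
      by (meson card_Un_le add_le_mono le_refl order_trans)
    then have "real (card Bad) \<le> real (card A1) + real (card A2) + real (card A3)" by linarith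
    also have "\<dots> \<le> (1 + real (card B * card \<Sigma>) + real (card B * card B)) * (\<epsilon> * real (card X))"
      using c1 c2 c3 by (simp add: algebra_simps)
    also have "\<dots> = (real N * \<epsilon>) * real (card X)" by (simp add: N_def algebra_simps)
    finally show ?thesis using Neps by simp
  qed
  have EX: "E \<subseteq> X \<times> \<Sigma> \<times> X" using phiX by (auto simp: E_def)
  have good: "x \<in> good_verts \<Sigma> X E r" if xX: "x \<in> X" and xB: "x \<notin> Bad" for x
  proof -
    have one: "\<phi> 1 x = x" using xX xB by (auto simp: Bad_def A1_def)
    have morx: "\<phi> (a * \<sigma>) x = \<phi> \<sigma> (\<phi> a x)" if "a \<in> B" "\<sigma> \<in> \<Sigma>" for a \<sigma>
      using xX xB that by (auto simp: Bad_def A2_def)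
    have injx: "\<phi> k1 x = \<phi> k2 x \<longleftrightarrow> k1 = k2" if "k1 \<in> B" "k2 \<in> B" for k1 k2
      using xX xB that by (auto simp: Bad_def A3_def P_def)
    have fold: "set w \<subseteq> \<Sigma> \<longrightarrow> length w \<le> Suc r \<longrightarrow> foldl (\<lambda>y \<sigma>. \<phi> \<sigma> y) x w = \<phi> (prod_list w) x" for w
    proof (induction w rule: rev_induct)
      case Nil then show ?case using one by simp
    next
      case (snoc \<sigma> w)
      show ?case
      proof (intro impI)
        assume s: "set (w @ [\<sigma>]) \<subseteq> \<Sigma>" and l: "length (w @ [\<sigma>]) \<le> Suc r"
        have "prod_list w \<in> B" unfolding B_def C_def ball_cayley using s l by auto
        then show "foldl (\<lambda>y \<sigma>. \<phi> \<sigma> y) x (w @ [\<sigma>]) = \<phi> (prod_list (w @ [\<sigma>])) x"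
          using snoc s l morx[of "prod_list w" \<sigma>] by simp
      qed
    qed
    have pr: "path_rel E n x v \<longleftrightarrow> (\<exists>w. set w \<subseteq> \<Sigma> \<and> length w = n \<and> v = foldl (\<lambda>y \<sigma>. \<phi> \<sigma> y) x w)" for n v
      unfolding E_def using path_rel_fun[OF phiX xX] .
    have ball: "ball_verts E r x = (\<lambda>k. \<phi> k x) ` Br"
    proof -
      have "ball_verts E r x = {v. \<exists>w. set w \<subseteq> \<Sigma> \<and> length w \<le> r \<and> v = foldl (\<lambda>y \<sigma>. \<phi> \<sigma> y) x w}"
        unfolding ball_verts_def pr by auto
      also have "\<dots> = {v. \<exists>w. set w \<subseteq> \<Sigma> \<and> length w \<le> r \<and> v = \<phi> (prod_list w) x}"
        using fold by (metis le_SucI)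
      also have "\<dots> = (\<lambda>k. \<phi> k x) ` Br" unfolding Br_def C_def ball_cayley by auto
      finally show ?thesis .
    qed
    have inj_on: "inj_on (\<lambda>k. \<phi> k x) Br"
      using injx BrB by (auto simp: inj_on_def)
    have edges: "(u, l, v) \<in> C \<longleftrightarrow> (\<phi> u x, l, \<phi> v x) \<in> E" if u: "u \<in> Br" and v: "v \<in> Br" for u v l
    proof -
      have uX: "\<phi> u x \<in> X" using phiX xX by blast
      have "(\<phi> u x, l, \<phi> v x) \<in> E \<longleftrightarrow> l \<in> \<Sigma> \<and> \<phi> v x = \<phi> l (\<phi> u x)"
        using uX by (auto simp: E_def)
      moreover have "u * l \<in> B" if "l \<in> \<Sigma>"
      proof -
        obtain w where "set w \<subseteq> \<Sigma>" "length w \<le> r" "u = prod_list w"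
          using u unfolding Br_def C_def ball_cayley by auto
        then show ?thesis unfolding B_def C_def ball_cayley using that
          by (intro CollectI exI[of _ "w @ [l]"]) auto
      qed
      moreover have "(u, l, v) \<in> C \<longleftrightarrow> l \<in> \<Sigma> \<and> v = u * l"
        by (auto simp: C_def cayley_edges_def)
      ultimately show ?thesis
      proof (cases "l \<in> \<Sigma>")
        case True
        have uB: "u \<in> B" and vB: "v \<in> B" using u v BrB by auto
        assume h1: "(\<phi> u x, l, \<phi> v x) \<in> E \<longleftrightarrow> l \<in> \<Sigma> \<and> \<phi> v x = \<phi> l (\<phi> u x)"
          and h2: "l \<in> \<Sigma> \<Longrightarrow> u * l \<in> B"
          and h3: "(u, l, v) \<in> C \<longleftrightarrow> l \<in> \<Sigma> \<and> v = u * l"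
        have ulB: "u * l \<in> B" using h2 True .
        have "(\<phi> u x, l, \<phi> v x) \<in> E \<longleftrightarrow> \<phi> v x = \<phi> (u * l) x"
          using h1 True morx[OF uB True] by simp
        also have "\<dots> \<longleftrightarrow> v = u * l" using injx[OF vB ulB] .
        finally show ?thesis using h3 True by simp
      qed simp
    qed
    have "pointed_iso (\<lambda>k. \<phi> k x) Br C 1 (ball_verts E r x) E x"
      unfolding pointed_iso_def using ball inj_on edges one by (auto simp: bij_betw_def)
    then show ?thesis using xX unfolding good_verts_def Br_def C_def by blast
  qed
  show "\<exists>V::nat set. \<exists>E. finite V \<and> V \<noteq> {} \<and> E \<subseteq> V \<times> \<Sigma> \<times> V \<and>
            real (card (good_verts \<Sigma> V E r)) \<ge> (1 - \<delta>) * real (card V)"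
  proof (intro exI conjI)
    show "finite X" "X \<noteq> {}" by (fact X)+
    show "E \<subseteq> X \<times> \<Sigma> \<times> X" by (fact EX)
    have "X - Bad \<subseteq> good_verts \<Sigma> X E r" using good by blast
    moreover have "finite (good_verts \<Sigma> X E r)" using X by (auto simp: good_verts_def)
    ultimately have "card (X - Bad) \<le> card (good_verts \<Sigma> X E r)" by (rule card_mono[rotated])
    moreover have "card X - card Bad \<le> card (X - Bad)" 
    proof (rule diff_card_le_card_Diff)
      have "Bad \<subseteq> X" by (auto simp: Bad_def A1_def A2_def A3_def)
      then show "finite Bad" using X finite_subset by blast
    qed
    ultimately have "real (card X) - real (card Bad) \<le> real (card (good_verts \<Sigma> X E r))" by linarith
    then show "real (card (good_verts \<Sigma> X E r)) \<ge> (1 - \<delta>) * real (card X)"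
      using cBad by (simp add: algebra_simps)
  qed
qed

theorem theorem6p1:
  fixes \<Sigma> :: "'a::monoid_mult set"
  assumes "finite \<Sigma>" and "generates \<Sigma>"
  shows "(weiss_condition \<Sigma> \<longrightarrow> sofic TYPE('a))
       \<and> (left_cancellative TYPE('a) \<and> sofic TYPE('a) \<longrightarrow> weiss_condition \<Sigma>)"
  using dir1[OF assms(2)] dir2[OF assms(1)] by blast

end
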